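(* Let $G$, $\mathcal{D}_G$, $\mathcal{A}_k$ and $\mathcal{Q}(\vec q)$ be as in the context. For every $\vec q\in\mathbb{Z}^c$, the set $\mathcal{Q}(\vec q)$ is either empty or consists of a single point.
   Context: Let $G$ be a finite connected planar graph with $n$ vertices and $m$ edges, such that every edge of $G$ lies on at least one cycle of $G$, and fix a planar embedding of $G$. Let $F_1,\dots,F_c$ ($c=m-n+1$) be the bounded faces of the embedding; each edge borders exactly two faces (possibly one of them the unbounded one). For $k\neq \ell$ let $m_{k\ell}$ be the number of edges bordering both $F_k$ and $F_\ell$, and let $m_k$ be the number of edges bordering $F_k$ and the unbounded face. Define $\mathcal{D}_G=\{\vec\varepsilon\in\mathbb{R}^c: |\varepsilon_k|\le 1 \text{ whenever } m_k>0,\ |\varepsilon_k-\varepsilon_\ell|\le 1\text{ whenever } m_{k\ell}>0\}$, and for $k=1,\dots,c$ the function $\mathcal{A}_k:\mathcal{D}_G\to\mathbb{R}$, $\mathcal{A}_k(\vec\varepsilon)=m_k\arcsin(\varepsilon_k)+\sum_{\ell\neq k}m_{k\ell}\arcsin(\varepsilon_k-\varepsilon_\ell)$ (the sum of the angle differences around the counterclockwise boundary of $F_k$ induced by loop flows $\varepsilon_1,\dots,\varepsilon_c$ on the faces). For $\vec q=(q_1,\dots,q_c)\in\mathbb{Z}^c$ let $\mathcal{Q}(\vec q)=\{\vec\varepsilon\in\mathcal{D}_G:\mathcal{A}_k(\vec\varepsilon)=2\pi q_k\text{ for all }k\}$. *)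

theory Defs
  imports "HOL-Analysis.Analysis" "HOL-Library.FuncSet"
begin

text \<open>A finite connected plane graph is encoded as a combinatorial map (rotation system):
a finite set D of darts (half-edges), a fixed-point-free involution alpha on D
(the two darts of an edge) and a permutation sigma of D (the counterclockwise
rotation of darts around each vertex).  The embedding is planar iff
Euler's formula V - E + F = 2 holds (genus 0).\<close>

definition orb :: "('a \<Rightarrow> 'a) \<Rightarrow> 'a \<Rightarrow> 'a set" where
  "orb f x = {(f ^^ n) x | n. True}"

definition map_vertices :: "'d set \<Rightarrow> ('d \<Rightarrow> 'd) \<Rightarrow> 'd set set" where
  "map_vertices D \<sigma> = orb \<sigma> ` D"

definition map_edges :: "'d set \<Rightarrow> ('d \<Rightarrow> 'd) \<Rightarrow> 'd set set" where
  "map_edges D \<alpha> = (\<lambda>d. {d, \<alpha> d}) ` D"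

definition map_faces :: "'d set \<Rightarrow> ('d \<Rightarrow> 'd) \<Rightarrow> ('d \<Rightarrow> 'd) \<Rightarrow> 'd set set" where
  "map_faces D \<alpha> \<sigma> = orb (\<sigma> \<circ> \<alpha>) ` D"

definition adj_excl :: "'d set \<Rightarrow> ('d \<Rightarrow> 'd) \<Rightarrow> ('d \<Rightarrow> 'd) \<Rightarrow> 'd set \<Rightarrow> ('d set \<times> 'd set) set" where
  "adj_excl D \<alpha> \<sigma> X = {(orb \<sigma> x, orb \<sigma> (\<alpha> x)) | x. x \<in> D \<and> x \<notin> X}"

definition plane_map :: "'d set \<Rightarrow> ('d \<Rightarrow> 'd) \<Rightarrow> ('d \<Rightarrow> 'd) \<Rightarrow> bool" where
  "plane_map D \<alpha> \<sigma> \<longleftrightarrow>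
     finite D \<and> D \<noteq> {} \<and>
     (\<forall>d\<in>D. \<alpha> d \<in> D \<and> \<alpha> (\<alpha> d) = d \<and> \<alpha> d \<noteq> d) \<and>
     bij_betw \<sigma> D D \<and>
     \<comment> \<open>connected\<close>
     (\<forall>v\<in>map_vertices D \<sigma>. \<forall>w\<in>map_vertices D \<sigma>. (v, w) \<in> (adj_excl D \<alpha> \<sigma> {})\<^sup>*) \<and>
     \<comment> \<open>planar (genus 0)\<close>
     int (card (map_vertices D \<sigma>)) - int (card (map_edges D \<alpha>)) + int (card (map_faces D \<alpha> \<sigma>)) = 2"

text \<open>Every edge lies on a cycle: its endpoints are joined by a path avoiding the edge
(a loop is itself a cycle).\<close>
definition every_edge_on_cycle :: "'d set \<Rightarrow> ('d \<Rightarrow> 'd) \<Rightarrow> ('d \<Rightarrow> 'd) \<Rightarrow> bool" where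
  "every_edge_on_cycle D \<alpha> \<sigma> \<longleftrightarrow>
     (\<forall>d\<in>D. (orb \<sigma> d, orb \<sigma> (\<alpha> d)) \<in> (adj_excl D \<alpha> \<sigma> {d, \<alpha> d})\<^sup>*)"

definition m_between :: "'d set \<Rightarrow> ('d \<Rightarrow> 'd) \<Rightarrow> 'd set \<Rightarrow> 'd set \<Rightarrow> nat" where
  "m_between D \<alpha> K L = card {e \<in> map_edges D \<alpha>. \<exists>d\<in>e. d \<in> K \<and> \<alpha> d \<in> L}"

definition bounded_faces :: "'d set \<Rightarrow> ('d \<Rightarrow> 'd) \<Rightarrow> ('d \<Rightarrow> 'd) \<Rightarrow> 'd set \<Rightarrow> 'd set set" where
  "bounded_faces D \<alpha> \<sigma> F0 = map_faces D \<alpha> \<sigma> - {F0}"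

text \<open>The domain D_G: vectors indexed by the bounded faces (F0 = unbounded face).\<close>
definition flow_domain :: "'d set \<Rightarrow> ('d \<Rightarrow> 'd) \<Rightarrow> ('d \<Rightarrow> 'd) \<Rightarrow> 'd set \<Rightarrow> ('d set \<Rightarrow> real) set" where
  "flow_domain D \<alpha> \<sigma> F0 =
     {\<epsilon> \<in> extensional (bounded_faces D \<alpha> \<sigma> F0).
        (\<forall>K\<in>bounded_faces D \<alpha> \<sigma> F0. m_between D \<alpha> K F0 > 0 \<longrightarrow> \<bar>\<epsilon> K\<bar> \<le> 1) \<and>
        (\<forall>K\<in>bounded_faces D \<alpha> \<sigma> F0. \<forall>L\<in>bounded_faces D \<alpha> \<sigma> F0.
            K \<noteq> L \<longrightarrow> m_between D \<alpha> K L > 0 \<longrightarrow> \<bar>\<epsilon> K - \<epsilon> L\<bar> \<le> 1)}"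

definition angle_sum :: "'d set \<Rightarrow> ('d \<Rightarrow> 'd) \<Rightarrow> ('d \<Rightarrow> 'd) \<Rightarrow> 'd set \<Rightarrow> 'd set \<Rightarrow> ('d set \<Rightarrow> real) \<Rightarrow> real" where
  "angle_sum D \<alpha> \<sigma> F0 K \<epsilon> =
     real (m_between D \<alpha> K F0) * arcsin (\<epsilon> K) +
     (\<Sum>L\<in>bounded_faces D \<alpha> \<sigma> F0 - {K}. real (m_between D \<alpha> K L) * arcsin (\<epsilon> K - \<epsilon> L))"

definition Q_set :: "'d set \<Rightarrow> ('d \<Rightarrow> 'd) \<Rightarrow> ('d \<Rightarrow> 'd) \<Rightarrow> 'd set \<Rightarrow> ('d set \<Rightarrow> int) \<Rightarrow> ('d set \<Rightarrow> real) set" where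
  "Q_set D \<alpha> \<sigma> F0 q =
     {\<epsilon> \<in> flow_domain D \<alpha> \<sigma> F0.
        \<forall>K\<in>bounded_faces D \<alpha> \<sigma> F0. angle_sum D \<alpha> \<sigma> F0 K \<epsilon> = 2 * pi * real_of_int (q K)}"

end

theory Submission
  imports Defs
begin

lemma orb_self: "x \<in> orb f x"
  unfolding orb_def by (auto intro: exI[of _ 0])

lemma orb_closed: "y \<in> orb f x \<Longrightarrow> f y \<in> orb f x"
proof -
  assume "y \<in> orb f x"
  then obtain n where "y = (f ^^ n) x" unfolding orb_def by auto
  then have "f y = (f ^^ Suc n) x" by simp
  then show ?thesis unfolding orb_def by blast
qed

lemma funpow_closed: "(\<And>z. z \<in> X \<Longrightarrow> f z \<in> X) \<Longrightarrow> z \<in> X \<Longrightarrow> (f ^^ n) z \<in> X"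
  by (induction n) auto

lemma m_between_pos:
  assumes "plane_map D \<alpha> \<sigma>" "d \<in> D" "d \<in> K" "\<alpha> d \<in> L"
  shows "m_between D \<alpha> K L > 0"
proof -
  have fin: "finite (map_edges D \<alpha>)" using assms(1) unfolding plane_map_def map_edges_def by auto
  have "{d, \<alpha> d} \<in> {e \<in> map_edges D \<alpha>. \<exists>d\<in>e. d \<in> K \<and> \<alpha> d \<in> L}"
    using assms unfolding map_edges_def by auto
  then show ?thesis unfolding m_between_def using fin
    by (metis (no_types, lifting) card_gt_0_iff empty_iff finite_subset mem_Collect_eq subsetI)
qed

lemma m_between_sym:
  assumes "plane_map D \<alpha> \<sigma>"
  shows "m_between D \<alpha> K L = m_between D \<alpha> L K"
proof -
  have inv: "\<forall>d\<in>D. \<alpha> d \<in> D \<and> \<alpha> (\<alpha> d) = d" using assms unfolding plane_map_def by auto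
  have *: "e \<in> map_edges D \<alpha> \<Longrightarrow> d \<in> e \<Longrightarrow> \<alpha> d \<in> e \<and> \<alpha> (\<alpha> d) = d" for e d
    using inv unfolding map_edges_def by auto
  have sub: "{e \<in> map_edges D \<alpha>. \<exists>d\<in>e. d \<in> A \<and> \<alpha> d \<in> C} \<subseteq> {e \<in> map_edges D \<alpha>. \<exists>d\<in>e. d \<in> C \<and> \<alpha> d \<in> A}" for A C
  proof
    fix e assume "e \<in> {e \<in> map_edges D \<alpha>. \<exists>d\<in>e. d \<in> A \<and> \<alpha> d \<in> C}"
    then obtain d where d: "e \<in> map_edges D \<alpha>" "d \<in> e" "d \<in> A" "\<alpha> d \<in> C" by auto
    have "\<alpha> d \<in> e" "\<alpha> (\<alpha> d) = d" using *[OF d(1,2)] by auto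
    then show "e \<in> {e \<in> map_edges D \<alpha>. \<exists>d\<in>e. d \<in> C \<and> \<alpha> d \<in> A}" using d by force
  qed
  have "{e \<in> map_edges D \<alpha>. \<exists>d\<in>e. d \<in> K \<and> \<alpha> d \<in> L} = {e \<in> map_edges D \<alpha>. \<exists>d\<in>e. d \<in> L \<and> \<alpha> d \<in> K}"
    using sub[of K L] sub[of L K] by (rule equalityI)
  then show ?thesis unfolding m_between_def by simp
qed

lemma conn:
  assumes pm: "plane_map D \<alpha> \<sigma>" and SF: "S \<subseteq> map_faces D \<alpha> \<sigma>" and Sne: "S \<noteq> {}"
    and F0: "F0 \<in> map_faces D \<alpha> \<sigma>" "F0 \<notin> S"
  shows "\<exists>K\<in>S. \<exists>L\<in>map_faces D \<alpha> \<sigma> - S. \<exists>d\<in>D. d \<in> K \<and> \<alpha> d \<in> L"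
proof (rule ccontr)
  assume na: "\<not> ?thesis"
  define f where "f = \<sigma> \<circ> \<alpha>"
  have inv: "\<And>d. d\<in>D \<Longrightarrow> \<alpha> d \<in> D \<and> \<alpha> (\<alpha> d) = d" using pm unfolding plane_map_def by auto
  have sD: "\<And>d. d\<in>D \<Longrightarrow> \<sigma> d \<in> D" using pm unfolding plane_map_def bij_betw_def by auto
  define X where "X = {d\<in>D. \<exists>K\<in>S. d \<in> K}"
  have cla: "\<alpha> d \<in> X" if dX: "d \<in> X" for d
  proof -
    obtain K where K: "K \<in> S" "d \<in> K" "d \<in> D" using dX X_def by auto
    have L: "orb f (\<alpha> d) \<in> map_faces D \<alpha> \<sigma>" using inv K unfolding map_faces_def f_def by auto
    have "orb f (\<alpha> d) \<in> S"
    proof (rule ccontr)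
      assume "orb f (\<alpha> d) \<notin> S"
      then have "orb f (\<alpha> d) \<in> map_faces D \<alpha> \<sigma> - S" using L by blast
      then show False using na K orb_self[of "\<alpha> d" f] by blast
    qed
    then show ?thesis using X_def inv K orb_self[of "\<alpha> d" f] by auto
  qed
  have cls: "\<sigma> d \<in> X" if dX: "d \<in> X" for d
  proof -
    have "\<alpha> d \<in> X" using cla dX by blast
    then obtain K where K: "K \<in> S" "\<alpha> d \<in> K" using X_def by auto
    then obtain k where k: "K = orb f k" using SF unfolding map_faces_def f_def by auto
    have "f (\<alpha> d) \<in> K" using orb_closed K k by metis
    moreover have "f (\<alpha> d) = \<sigma> d" using inv dX X_def f_def by auto
    ultimately show ?thesis using K X_def sD dX by auto
  qed
  have clsn: "(\<sigma> ^^ n) z \<in> X" if "z \<in> X" for n z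
    using funpow_closed[of X \<sigma>] cls that by blast
  have orbX: "u \<in> X" if "z \<in> X" "orb \<sigma> z = orb \<sigma> u" for z u
  proof -
    have "u \<in> orb \<sigma> z" using that orb_self by metis
    then obtain n where "u = (\<sigma> ^^ n) z" unfolding orb_def by auto
    then show ?thesis using clsn that by auto
  qed
  obtain K0 where K0: "K0 \<in> S" using Sne by auto
  then have "K0 \<in> orb f ` D" using SF unfolding map_faces_def f_def by blast
  then obtain k0 where k0: "K0 = orb f k0" "k0 \<in> D" by (elim imageE) simp
  have "k0 \<in> K0" using k0(1) orb_self by metis
  then have x: "k0 \<in> X" using K0 k0(2) unfolding X_def by blast
  have DX: "y \<in> X" if y: "y \<in> D" for y
  proof -
    have cn: "\<forall>v\<in>map_vertices D \<sigma>. \<forall>w\<in>map_vertices D \<sigma>. (v, w) \<in> (adj_excl D \<alpha> \<sigma> {})\<^sup>*"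
      using pm unfolding plane_map_def by (elim conjE) assumption
    have "orb \<sigma> k0 \<in> map_vertices D \<sigma>" "orb \<sigma> y \<in> map_vertices D \<sigma>"
      using y k0(2) unfolding map_vertices_def by auto
    then have "(orb \<sigma> k0, orb \<sigma> y) \<in> (adj_excl D \<alpha> \<sigma> {})\<^sup>*"
      using cn by blast
    then have "\<exists>z\<in>X. orb \<sigma> z = orb \<sigma> y"
    proof (induction rule: rtrancl_induct)
      case base
      then show ?case using x by auto
    next
      case (step v w)
      then obtain z where z: "z \<in> X" "orb \<sigma> z = v" by auto
      from step(2) obtain u where u: "v = orb \<sigma> u" "w = orb \<sigma> (\<alpha> u)" "u \<in> D"
        unfolding adj_excl_def by auto
      have "u \<in> X" using orbX z u by metis
      then show ?case using cla u by auto
    qed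
    then show ?thesis using orbX by metis
  qed
  obtain d0 where d0: "F0 = orb f d0" "d0 \<in> D" using F0 unfolding map_faces_def f_def by auto
  have "\<alpha> d0 \<in> X" using DX inv d0 by auto
  then obtain K where K: "K \<in> S" "\<alpha> d0 \<in> K" using X_def by auto
  have "\<alpha> (\<alpha> d0) \<in> F0" using inv d0 orb_self by metis
  moreover have "\<alpha> d0 \<in> D" using inv d0 by blast
  moreover have "F0 \<in> map_faces D \<alpha> \<sigma> - S" using F0 by blast
  ultimately show False using na K by blast
qed

lemma main_le:
  assumes pm: "plane_map D \<alpha> \<sigma>" and F0: "F0 \<in> map_faces D \<alpha> \<sigma>"
    and e: "\<epsilon> \<in> Q_set D \<alpha> \<sigma> F0 q" and e': "\<epsilon>' \<in> Q_set D \<alpha> \<sigma> F0 q"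
  shows "\<forall>K\<in>bounded_faces D \<alpha> \<sigma> F0. \<epsilon> K \<le> \<epsilon>' K"
proof (rule ccontr)
  assume na: "\<not> (\<forall>K\<in>bounded_faces D \<alpha> \<sigma> F0. \<epsilon> K \<le> \<epsilon>' K)"
  define B where "B = bounded_faces D \<alpha> \<sigma> F0"
  obtain K0 where K0: "K0 \<in> B" "\<epsilon> K0 > \<epsilon>' K0" using na unfolding B_def by force
  define \<delta> where "\<delta> K = \<epsilon> K - \<epsilon>' K" for K
  have finB: "finite B" using pm unfolding B_def bounded_faces_def map_faces_def plane_map_def by auto
  define M where "M = Max (\<delta> ` B)"
  have Mge: "\<delta> K \<le> M" if "K \<in> B" for K using finB that M_def by auto
  have Mpos: "M > 0" using Mge[OF K0(1)] K0 \<delta>_def by auto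
  have Min: "M \<in> \<delta> ` B" using finB K0 M_def Max_in by blast
  define S where "S = {K\<in>B. \<delta> K = M}"
  have Sne: "S \<noteq> {}" using Min S_def by auto
  have SB: "S \<subseteq> B" using S_def by auto
  have finS: "finite S" using finB SB finite_subset by blast
  define m where "m = m_between D \<alpha>"
  define g where "g K L = real (m K L) * (arcsin (\<epsilon> K - \<epsilon> L) - arcsin (\<epsilon>' K - \<epsilon>' L))" for K L
  define h where "h K = real (m K F0) * (arcsin (\<epsilon> K) - arcsin (\<epsilon>' K))" for K
  have dom: "\<epsilon> \<in> flow_domain D \<alpha> \<sigma> F0" "\<epsilon>' \<in> flow_domain D \<alpha> \<sigma> F0"
    using e e' unfolding Q_set_def by auto
  have d1: "\<bar>x K\<bar> \<le> 1" if "x \<in> flow_domain D \<alpha> \<sigma> F0" "K \<in> B" "m K F0 > 0" for x K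
  proof -
    have "\<forall>K\<in>B. m K F0 > 0 \<longrightarrow> \<bar>x K\<bar> \<le> 1" using that(1) unfolding flow_domain_def B_def m_def by blast
    then show ?thesis using that(2,3) by blast
  qed
  have d2: "\<bar>x K - x L\<bar> \<le> 1" if "x \<in> flow_domain D \<alpha> \<sigma> F0" "K \<in> B" "L \<in> B" "K \<noteq> L" "m K L > 0" for x K L
  proof -
    have "\<forall>K\<in>B. \<forall>L\<in>B. K \<noteq> L \<longrightarrow> m K L > 0 \<longrightarrow> \<bar>x K - x L\<bar> \<le> 1" using that(1) unfolding flow_domain_def B_def m_def by blast
    then show ?thesis using that(2-5) by blast
  qed
  have msym: "m K L = m L K" for K L using m_between_sym[OF pm] m_def by auto
  have eq: "h K + (\<Sum>L\<in>B. g K L) = 0" if K: "K \<in> B" for K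
  proof -
    have "angle_sum D \<alpha> \<sigma> F0 K \<epsilon> = angle_sum D \<alpha> \<sigma> F0 K \<epsilon>'"
      using e e' K unfolding Q_set_def B_def by auto
    then have ae: "real (m K F0) * arcsin (\<epsilon> K) + (\<Sum>L\<in>B-{K}. real (m K L) * arcsin (\<epsilon> K - \<epsilon> L))
       = real (m K F0) * arcsin (\<epsilon>' K) + (\<Sum>L\<in>B-{K}. real (m K L) * arcsin (\<epsilon>' K - \<epsilon>' L))"
      unfolding angle_sum_def m_def B_def by simp
    have sg: "(\<Sum>L\<in>B-{K}. g K L) = (\<Sum>L\<in>B-{K}. real (m K L) * arcsin (\<epsilon> K - \<epsilon> L))
       - (\<Sum>L\<in>B-{K}. real (m K L) * arcsin (\<epsilon>' K - \<epsilon>' L))"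
      unfolding g_def by (simp add: right_diff_distrib sum_subtractf)
    have hK: "h K = real (m K F0) * arcsin (\<epsilon> K) - real (m K F0) * arcsin (\<epsilon>' K)"
      unfolding h_def by (simp add: right_diff_distrib)
    have "h K + (\<Sum>L\<in>B-{K}. g K L) = 0" using ae sg hK by linarith
    moreover have "(\<Sum>L\<in>B. g K L) = g K K + (\<Sum>L\<in>B-{K}. g K L)"
      by (rule sum.remove[OF finB K])
    moreover have "g K K = 0" using g_def by simp
    ultimately show ?thesis by simp
  qed
  have anti: "g L K = - g K L" if "K \<in> B" "L \<in> B" for K L
  proof (cases "K = L \<or> m K L = 0")
    case True
    then show ?thesis using msym[of K L] unfolding g_def by auto
  next
    case False
    then have p: "m K L > 0" "m L K > 0" "K \<noteq> L" using msym[of K L] by auto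
    have b1: "\<bar>\<epsilon> K - \<epsilon> L\<bar> \<le> 1" "\<bar>\<epsilon>' K - \<epsilon>' L\<bar> \<le> 1"
      using d2[OF dom(1) that p(3) p(1)] d2[OF dom(2) that p(3) p(1)] by auto
    have "arcsin (\<epsilon> L - \<epsilon> K) = - arcsin (\<epsilon> K - \<epsilon> L)"
      using arcsin_minus[of "\<epsilon> K - \<epsilon> L"] b1 by (simp add: abs_le_iff)
    moreover have "arcsin (\<epsilon>' L - \<epsilon>' K) = - arcsin (\<epsilon>' K - \<epsilon>' L)"
      using arcsin_minus[of "\<epsilon>' K - \<epsilon>' L"] b1 by (simp add: abs_le_iff)
    ultimately show ?thesis using msym[of K L] unfolding g_def by (simp add: algebra_simps)
  qed
  have inner0: "(\<Sum>K\<in>S. \<Sum>L\<in>S. g K L) = 0"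
  proof -
    have "(\<Sum>K\<in>S. \<Sum>L\<in>S. g K L) = (\<Sum>L\<in>S. \<Sum>K\<in>S. g K L)" by (rule sum.swap)
    also have "\<dots> = (\<Sum>L\<in>S. \<Sum>K\<in>S. - g L K)"
      by (intro sum.cong refl, rule anti) (use SB in auto)
    also have "\<dots> = - (\<Sum>K\<in>S. \<Sum>L\<in>S. g K L)" by (simp add: sum_negf)
    finally show ?thesis by simp
  qed
  have split: "(\<Sum>L\<in>B. g K L) = (\<Sum>L\<in>S. g K L) + (\<Sum>L\<in>B-S. g K L)" for K
    using sum.subset_diff[OF SB finB, of "g K"] by linarith
  have tot: "(\<Sum>K\<in>S. h K + (\<Sum>L\<in>B-S. g K L)) = 0"
  proof -
    have "(\<Sum>K\<in>S. h K + (\<Sum>L\<in>B. g K L)) = 0" by (rule sum.neutral) (use eq SB in blast)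
    then have "(\<Sum>K\<in>S. h K + (\<Sum>L\<in>B-S. g K L)) + (\<Sum>K\<in>S. \<Sum>L\<in>S. g K L) = 0"
      unfolding split by (simp add: sum.distrib algebra_simps)
    then show ?thesis using inner0 by simp
  qed
  have hpos: "h K > 0" if "K \<in> S" "m K F0 > 0" for K
  proof -
    have KB: "K \<in> B" using that SB by auto
    have "\<delta> K = M" using that S_def by auto
    then have lt: "\<epsilon>' K < \<epsilon> K" using Mpos \<delta>_def by auto
    have "arcsin (\<epsilon>' K) < arcsin (\<epsilon> K)"
      using d1[OF dom(1) KB that(2)] d1[OF dom(2) KB that(2)] lt
      by (intro arcsin_less_arcsin) (auto simp: abs_le_iff)
    then show ?thesis using h_def that by simp
  qed
  have hnn: "h K \<ge> 0" if "K \<in> S" for K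
    using hpos[OF that] h_def by (cases "m K F0 > 0") auto
  have gpos: "g K L > 0" if "K \<in> S" "L \<in> B - S" "m K L > 0" for K L
  proof -
    have KB: "K \<in> B" "L \<in> B" "K \<noteq> L" using that SB by auto
    have "\<delta> K = M" "\<delta> L \<noteq> M" "\<delta> L \<le> M" using that S_def Mge by auto
    then have lt: "\<epsilon>' K - \<epsilon>' L < \<epsilon> K - \<epsilon> L" using \<delta>_def by auto
    have "arcsin (\<epsilon>' K - \<epsilon>' L) < arcsin (\<epsilon> K - \<epsilon> L)"
      using d2[OF dom(1) KB that(3)] d2[OF dom(2) KB that(3)] lt
      by (intro arcsin_less_arcsin) (auto simp: abs_le_iff)
    then show ?thesis using g_def that by simp
  qed
  have gnn: "g K L \<ge> 0" if "K \<in> S" "L \<in> B - S" for K L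
    using gpos[OF that] g_def by (cases "m K L > 0") auto
  have finBS: "finite (B - S)" using finB by auto
  have all0: "h K + (\<Sum>L\<in>B-S. g K L) = 0" if "K \<in> S" for K
  proof -
    have nn: "0 \<le> h K + (\<Sum>L\<in>B-S. g K L)" if "K \<in> S" for K
    proof -
      have "0 \<le> (\<Sum>L\<in>B-S. g K L)" by (rule sum_nonneg) (rule gnn[OF that])
      then show ?thesis using hnn[OF that] by linarith
    qed
    have "\<forall>K\<in>S. h K + (\<Sum>L\<in>B-S. g K L) = 0"
      using tot sum_nonneg_eq_0_iff[OF finS, of "\<lambda>K. h K + (\<Sum>L\<in>B-S. g K L)"] nn by blast
    then show ?thesis using that by blast
  qed
  have h0: "h K = 0" and g0: "\<forall>L\<in>B-S. g K L = 0" if "K \<in> S" for K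
  proof -
    have s: "(\<Sum>L\<in>B-S. g K L) \<ge> 0" by (rule sum_nonneg) (rule gnn[OF that])
    show "h K = 0" using all0[OF that] hnn[OF that] s by linarith
    then have "(\<Sum>L\<in>B-S. g K L) = 0" using all0[OF that] by simp
    then show "\<forall>L\<in>B-S. g K L = 0" using sum_nonneg_eq_0_iff[OF finBS, of "g K"] gnn[OF that] by blast
  qed
  have SF: "S \<subseteq> map_faces D \<alpha> \<sigma>" using SB unfolding B_def bounded_faces_def by auto
  have F0S: "F0 \<notin> S" using SB unfolding B_def bounded_faces_def by auto
  obtain K L d where KL: "K \<in> S" "L \<in> map_faces D \<alpha> \<sigma> - S" "d \<in> D" "d \<in> K" "\<alpha> d \<in> L"
    using conn[OF pm SF Sne F0 F0S] by blast
  have mp: "m K L > 0" using m_between_pos[OF pm KL(3-5)] m_def by simp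
  show False
  proof (cases "L = F0")
    case True
    then show ?thesis using hpos[OF KL(1)] h0[OF KL(1)] mp by auto
  next
    case False
    then have "L \<in> B - S" using KL unfolding B_def bounded_faces_def by auto
    then show ?thesis using gpos[OF KL(1)] g0[OF KL(1)] mp by force
  qed
qed

theorem theorem1:
  fixes D :: "'d set" and \<alpha> \<sigma> :: "'d \<Rightarrow> 'd" and F0 :: "'d set" and q :: "'d set \<Rightarrow> int"
  assumes "plane_map D \<alpha> \<sigma>"
    and "every_edge_on_cycle D \<alpha> \<sigma>"
    and "F0 \<in> map_faces D \<alpha> \<sigma>"
  shows "Q_set D \<alpha> \<sigma> F0 q = {} \<or> (\<exists>\<epsilon>. Q_set D \<alpha> \<sigma> F0 q = {\<epsilon>})"
proof (cases "Q_set D \<alpha> \<sigma> F0 q = {}")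
  case False
  then obtain \<epsilon> where e: "\<epsilon> \<in> Q_set D \<alpha> \<sigma> F0 q" by auto
  have "\<epsilon>' = \<epsilon>" if e': "\<epsilon>' \<in> Q_set D \<alpha> \<sigma> F0 q" for \<epsilon>'
  proof -
    have "\<forall>K\<in>bounded_faces D \<alpha> \<sigma> F0. \<epsilon>' K = \<epsilon> K"
      using main_le[OF assms(1,3) e e'] main_le[OF assms(1,3) e' e] by force
    moreover have "\<epsilon> \<in> extensional (bounded_faces D \<alpha> \<sigma> F0)" "\<epsilon>' \<in> extensional (bounded_faces D \<alpha> \<sigma> F0)"
      using e e' unfolding Q_set_def flow_domain_def by auto
    ultimately show ?thesis by (metis extensionalityI)
  qed
  then have "Q_set D \<alpha> \<sigma> F0 q = {\<epsilon>}" using e by blast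
  then show ?thesis by blast
qed simp

end
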